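(* For any instance of MPMD or MBPMD, the total waiting cost incurred by Greedy Dual equals $\sum_{S\subseteq V}\mathrm{sur}(S)\,y_S(T)$, where $V$ is the set of all requests and $T$ is the time at which Greedy Dual matches the last request.
   Context: Problem (MPMD / MBPMD). Let $(\mathcal{X},\mathrm{dist})$ be a metric space. An instance consists of $2m$ requests $u_1,\dots,u_{2m}$. Each request $u$ is a triple $(\mathrm{pos}(u),\mathrm{atime}(u),\mathrm{sgn}(u))$, where $\mathrm{pos}(u)\in\mathcal{X}$ is its location and $\mathrm{atime}(u)\ge0$ is its arrival time, with arrival times nondecreasing. In MPMD, $\mathrm{sgn}(u)=0$ for all requests. In MBPMD, exactly $m$ requests have sign $+1$ and $m$ have sign $-1$. At time $\tau$, an algorithm may match two arrived, unmatched requests $u,v$ with $\mathrm{sgn}(u)=-\mathrm{sgn}(v)$, at cost $\mathrm{dist}(\mathrm{pos}(u),\mathrm{pos}(v))$ (connection cost) plus $(\tau-\mathrm{atime}(u))+(\tau-\mathrm{atime}(v))$ (waiting costs). All requests must eventually be matched. The total waiting cost of an algorithm is the sum, over all requests, of the time between the request's arrival and the moment it is matched. Notation. Edges are unordered pairs $\{u,v\}$ of distinct requests with $\mathrm{sgn}(u)=-\mathrm{sgn}(v)$. For a set $S$ of requests, $\delta(S)$ is the set of edges with exactly one endpoint in $S$. In MPMD, $\mathrm{sur}(S)=|S|\bmod 2$; in MBPMD, $\mathrm{sur}(S)=|\sum_{u\in S}\mathrm{sgn}(u)|$. For an edge $e=(u,v)$, $\mathrm{cost}(e)=\mathrm{dist}(\mathrm{pos}(u),\mathrm{pos}(v))+|\mathrm{atime}(u)-\mathrm{atime}(v)|$.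 Algorithm Greedy Dual (GD). GD maintains a dual variable $y_S\ge0$ for every set $S$ of already-arrived requests; $y_S(\tau)$ denotes its value at time $\tau$. It also maintains a partition of the arrived requests into active sets, with $\mathcal{A}(u)$ denoting the active set containing $u$. An active set is growing if it contains at least one free request, and non-growing otherwise. - When a request $u$ arrives, $\mathcal{A}(u)\leftarrow\{u\}$ becomes a new active set, and $y_S\leftarrow 0$ for every new set $S$ containing $u$. - Tight-constraint event: while there is an edge $e=(u,v)$ between arrived requests with $\mathcal{A}(u)\neq\mathcal{A}(v)$ and $\sum_{S:\,e\in\delta(S)}y_S=\mathrm{cost}(e)$, GD does the following. It merges the two sets: $S=\mathcal{A}(u)\cup\mathcal{A}(v)$ becomes active and $\mathcal{A}(w)\leftarrow S$ for all $w\in S$, while $\mathcal{A}(u)$ and $\mathcal{A}(v)$ become inactive. It marks the edge $e$. Then, while there are free $u',v'\in S$ with $\mathrm{sgn}(u')=-\mathrm{sgn}(v')$, it matches $u'$ with $v'$ at the current time. - At all other times, $y_S$ increases continuously at rate $1$ (the same rate as time) for every active growing set $S$; all other dual variables stay constant. *)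

theory Defs
  imports Main "HOL-Analysis.Analysis"
begin

text \<open>Requests are the elements of a finite set V of some type 'r; each request u has a
position pos u in a metric space, an arrival time atime u and a sign sg u.\<close>

definition mpmd_instance :: "'r set \<Rightarrow> ('r \<Rightarrow> real) \<Rightarrow> ('r \<Rightarrow> int) \<Rightarrow> bool" where
  "mpmd_instance V atime sg \<longleftrightarrow>
     finite V \<and> even (card V) \<and> (\<forall>u\<in>V. atime u \<ge> 0) \<and> (\<forall>u\<in>V. sg u = 0)"

definition mbpmd_instance :: "'r set \<Rightarrow> ('r \<Rightarrow> real) \<Rightarrow> ('r \<Rightarrow> int) \<Rightarrow> bool" where
  "mbpmd_instance V atime sg \<longleftrightarrow>
     finite V \<and> (\<forall>u\<in>V. atime u \<ge> 0) \<and> (\<forall>u\<in>V. sg u = 1 \<or> sg u = -1) \<and>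
     card {u\<in>V. sg u = 1} = card {u\<in>V. sg u = -1}"

definition is_edge :: "('r \<Rightarrow> int) \<Rightarrow> 'r \<Rightarrow> 'r \<Rightarrow> bool" where
  "is_edge sg u v \<longleftrightarrow> u \<noteq> v \<and> sg u = - sg v"

definition edge_cost :: "('r \<Rightarrow> 'p::metric_space) \<Rightarrow> ('r \<Rightarrow> real) \<Rightarrow> 'r \<Rightarrow> 'r \<Rightarrow> real" where
  "edge_cost pos atime u v = dist (pos u) (pos v) + \<bar>atime u - atime v\<bar>"

definition dual_load :: "'r set \<Rightarrow> ('r set \<Rightarrow> real) \<Rightarrow> 'r \<Rightarrow> 'r \<Rightarrow> real" where
  "dual_load V y u v = (\<Sum>S\<in>{S. S \<subseteq> V \<and> (u \<in> S) \<noteq> (v \<in> S)}. y S)"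

text \<open>Surplus; the flag bip selects MBPMD (True) or MPMD (False).\<close>
definition sur :: "bool \<Rightarrow> ('r \<Rightarrow> int) \<Rightarrow> 'r set \<Rightarrow> nat" where
  "sur bip sg S = (if bip then nat \<bar>\<Sum>u\<in>S. sg u\<bar> else card S mod 2)"

text \<open>A state: current time, arrived requests, free (arrived, unmatched) requests,
  active set of each arrived request, dual variables, and the matching time of each
  matched request.\<close>
record 'r gd_state =
  tm  :: real
  arr :: "'r set"
  fr  :: "'r set"
  act :: "'r \<Rightarrow> 'r set"
  y   :: "'r set \<Rightarrow> real"
  mt  :: "'r \<Rightarrow> real"

definition gd_init :: "'r gd_state" where
  "gd_init = \<lparr>tm = 0, arr = {}, fr = {}, act = (\<lambda>_. {}), y = (\<lambda>_. 0), mt = (\<lambda>_. 0)\<rparr>"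

inductive greedy_match :: "('r \<Rightarrow> int) \<Rightarrow> 'r set \<Rightarrow> real \<Rightarrow>
    'r set \<times> ('r \<Rightarrow> real) \<Rightarrow> 'r set \<times> ('r \<Rightarrow> real) \<Rightarrow> bool"
  for sg S \<tau> where
  gm_stop: "\<not> (\<exists>u\<in>F \<inter> S. \<exists>v\<in>F \<inter> S. is_edge sg u v) \<Longrightarrow>
     greedy_match sg S \<tau> (F, M) (F, M)"
| gm_step: "u \<in> F \<inter> S \<Longrightarrow> v \<in> F \<inter> S \<Longrightarrow> is_edge sg u v \<Longrightarrow>
     greedy_match sg S \<tau> (F - {u, v}, M(u := \<tau>, v := \<tau>)) R \<Longrightarrow>
     greedy_match sg S \<tau> (F, M) R"

text \<open>One step of Greedy Dual: an arrival, a tight-constraint event (merge + matching),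
  or a continuous time advance during which every active growing set grows at rate 1.
  Time only advances when no event is pending at the current time, it never skips an
  arrival and it never lets an edge constraint between different active sets become
  violated; time stops once all requests have arrived and been matched.\<close>
inductive gd_step :: "'r set \<Rightarrow> ('r \<Rightarrow> 'p::metric_space) \<Rightarrow> ('r \<Rightarrow> real) \<Rightarrow> ('r \<Rightarrow> int) \<Rightarrow>
    'r gd_state \<Rightarrow> 'r gd_state \<Rightarrow> bool"
  for V pos atime sg where
  arrive: "u \<in> V \<Longrightarrow> u \<notin> arr s \<Longrightarrow> atime u = tm s \<Longrightarrow>
     gd_step V pos atime sg s
       (s\<lparr>arr := insert u (arr s), fr := insert u (fr s), act := (act s)(u := {u}),
          y := (\<lambda>S. if u \<in> S then 0 else y s S)\<rparr>)"
| tight: "u \<in> arr s \<Longrightarrow> v \<in> arr s \<Longrightarrow> is_edge sg u v \<Longrightarrow> act s u \<noteq> act s v \<Longrightarrow>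
     dual_load V (y s) u v = edge_cost pos atime u v \<Longrightarrow>
     S = act s u \<union> act s v \<Longrightarrow>
     greedy_match sg S (tm s) (fr s, mt s) (F', M') \<Longrightarrow>
     gd_step V pos atime sg s
       (s\<lparr>act := (\<lambda>w. if w \<in> S then S else act s w), fr := F', mt := M'\<rparr>)"
| advance: "\<tau>' > tm s \<Longrightarrow> \<not> (arr s = V \<and> fr s = {}) \<Longrightarrow>
     (\<forall>u\<in>V - arr s. atime u \<ge> \<tau>') \<Longrightarrow>
     y' = (\<lambda>S. if S \<in> act s ` arr s \<and> S \<inter> fr s \<noteq> {} then y s S + (\<tau>' - tm s) else y s S) \<Longrightarrow>
     (\<forall>u\<in>arr s. \<forall>v\<in>arr s. is_edge sg u v \<and> act s u \<noteq> act s v \<longrightarrow>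
         dual_load V (y s) u v < edge_cost pos atime u v \<and>
         dual_load V y' u v \<le> edge_cost pos atime u v) \<Longrightarrow>
     gd_step V pos atime sg s (s\<lparr>tm := \<tau>', y := y'\<rparr>)"

end

theory Submission imports Defs begin

lemma gm_props:
  assumes "greedy_match sg S \<tau> P R" "finite (fst P)"
  shows "fst R \<subseteq> fst P \<and> fst P - fst R \<subseteq> S \<and> even (card (fst P - fst R)) \<and>
         sum sg (fst P - fst R) = 0 \<and>
         (\<forall>w. snd R w = (if w \<in> fst P - fst R then \<tau> else snd P w)) \<and>
         \<not> (\<exists>a\<in>fst R \<inter> S. \<exists>b\<in>fst R \<inter> S. is_edge sg a b)"
  using assms
proof (induction rule: greedy_match.induct)
  case (gm_stop F M)
  then show ?case by auto
next
  case (gm_step u F v M R)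
  let ?F1 = "F - {u,v}"
  from gm_step have IH: "fst R \<subseteq> ?F1 \<and> ?F1 - fst R \<subseteq> S \<and> even (card (?F1 - fst R)) \<and>
         sum sg (?F1 - fst R) = 0 \<and>
         (\<forall>w. snd R w = (if w \<in> ?F1 - fst R then \<tau> else (M(u := \<tau>, v := \<tau>)) w)) \<and>
         \<not> (\<exists>a\<in>fst R \<inter> S. \<exists>b\<in>fst R \<inter> S. is_edge sg a b)"
    using gm_step.IH gm_step.prems by simp
  have uv: "u \<noteq> v" "sg u = - sg v" using gm_step(3) by (auto simp: is_edge_def)
  have eq: "F - fst R = insert u (insert v (?F1 - fst R))" using IH gm_step(1,2) by auto
  have fin: "finite (?F1 - fst R)" using gm_step.prems by auto
  have c: "card (F - fst R) = Suc (Suc (card (?F1 - fst R)))"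
    unfolding eq using fin uv by simp
  have s: "sum sg (F - fst R) = sg u + sg v + sum sg (?F1 - fst R)"
    unfolding eq using fin uv by simp
  show ?case using IH c s uv gm_step(1,2) eq by auto
qed

definition modeok :: "bool \<Rightarrow> ('r \<Rightarrow> int) \<Rightarrow> 'r set \<Rightarrow> bool" where
  "modeok bip sg V = (if bip then (\<forall>u\<in>V. sg u = 1 \<or> sg u = -1) else (\<forall>u\<in>V. sg u = 0))"

lemma sur_eq:
  assumes m: "modeok bip sg V" and AV: "A \<subseteq> V" and fA: "finite A"
    and ev: "even (card (A - Fr))" and sm: "sum sg (A - Fr) = 0"
    and ne: "\<not> (\<exists>a\<in>Fr \<inter> A. \<exists>b\<in>Fr \<inter> A. is_edge sg a b)"
  shows "card (Fr \<inter> A) = sur bip sg A"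
proof (cases bip)
  case True
  have sg: "\<forall>u\<in>A. sg u = 1 \<or> sg u = -1" using m AV True by (auto simp: modeok_def)
  have split: "sum sg A = sum sg (A - Fr) + sum sg (Fr \<inter> A)"
    using fA by (metis Int_commute add.commute sum.Int_Diff)
  have same: "(\<forall>u\<in>Fr \<inter> A. sg u = 1) \<or> (\<forall>u\<in>Fr \<inter> A. sg u = -1)"
  proof (rule ccontr)
    assume "\<not> ?thesis"
    then obtain a b where "a \<in> Fr \<inter> A" "b \<in> Fr \<inter> A" "sg a \<noteq> 1" "sg b \<noteq> -1" by auto
    with sg have "sg a = -1" "sg b = 1" by auto
    hence "is_edge sg a b" unfolding is_edge_def by auto
    with ne \<open>a \<in> Fr \<inter> A\<close> \<open>b \<in> Fr \<inter> A\<close> show False by blast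
  qed
  then show ?thesis
  proof
    assume h: "\<forall>u\<in>Fr \<inter> A. sg u = 1"
    have "sum sg (Fr \<inter> A) = int (card (Fr \<inter> A))" using h by simp
    thus ?thesis using split sm True by (simp add: sur_def)
  next
    assume h: "\<forall>u\<in>Fr \<inter> A. sg u = -1"
    have "sum sg (Fr \<inter> A) = - int (card (Fr \<inter> A))" using h by (simp add: sum_negf)
    thus ?thesis using split sm True by (simp add: sur_def)
  qed
next
  case False
  have sg: "\<forall>u\<in>A. sg u = 0" using m AV False by (auto simp: modeok_def)
  have le: "card (Fr \<inter> A) \<le> 1"
  proof -
    have "\<forall>a\<in>Fr \<inter> A. \<forall>b\<in>Fr \<inter> A. a = b"
      using ne sg unfolding is_edge_def by auto
    thus ?thesis using card_le_Suc0_iff_eq[of "Fr \<inter> A"] fA by simp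
  qed
  have "card A = card (A - Fr) + card (Fr \<inter> A)"
    using fA by (metis Int_commute add.commute card_Int_Diff)
  then show ?thesis using le ev False by (auto simp: sur_def)
qed

definition wc :: "('r \<Rightarrow> real) \<Rightarrow> 'r gd_state \<Rightarrow> real" where
  "wc atime s = (\<Sum>u\<in>arr s. (if u \<in> fr s then tm s else mt s u) - atime u)"

definition gd_inv :: "'r set \<Rightarrow> ('r \<Rightarrow> real) \<Rightarrow> bool \<Rightarrow> ('r \<Rightarrow> int) \<Rightarrow> 'r gd_state \<Rightarrow> bool" where
  "gd_inv V atime bip sg s \<longleftrightarrow> arr s \<subseteq> V \<and> fr s \<subseteq> arr s \<and>
     (\<forall>u\<in>arr s. u \<in> act s u \<and> act s u \<subseteq> arr s \<and> (\<forall>w\<in>act s u. act s w = act s u) \<and>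
        even (card (act s u - fr s)) \<and> sum sg (act s u - fr s) = 0 \<and>
        (\<forall>a\<in>fr s \<inter> act s u. \<forall>b\<in>fr s \<inter> act s u. \<not> is_edge sg a b)) \<and>
     (\<forall>S. y s S \<noteq> 0 \<longrightarrow> S \<subseteq> arr s) \<and>
     wc atime s = (\<Sum>S\<in>Pow V. real (sur bip sg S) * y s S)"

lemma gd_invD:
  assumes "gd_inv V atime bip sg s"
  shows "arr s \<subseteq> V" "fr s \<subseteq> arr s"
    "\<And>u. u \<in> arr s \<Longrightarrow> u \<in> act s u"
    "\<And>u. u \<in> arr s \<Longrightarrow> act s u \<subseteq> arr s"
    "\<And>u w. u \<in> arr s \<Longrightarrow> w \<in> act s u \<Longrightarrow> act s w = act s u"
    "\<And>u. u \<in> arr s \<Longrightarrow> even (card (act s u - fr s))"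
    "\<And>u. u \<in> arr s \<Longrightarrow> sum sg (act s u - fr s) = 0"
    "\<And>u a b. u \<in> arr s \<Longrightarrow> a \<in> fr s \<inter> act s u \<Longrightarrow> b \<in> fr s \<inter> act s u \<Longrightarrow> \<not> is_edge sg a b"
    "\<And>S. y s S \<noteq> 0 \<Longrightarrow> S \<subseteq> arr s"
    "wc atime s = (\<Sum>S\<in>Pow V. real (sur bip sg S) * y s S)"
proof -
  note h = assms[unfolded gd_inv_def]
  have P3: "\<And>u. u \<in> arr s \<Longrightarrow> u \<in> act s u \<and> act s u \<subseteq> arr s \<and> (\<forall>w\<in>act s u. act s w = act s u) \<and>
        even (card (act s u - fr s)) \<and> sum sg (act s u - fr s) = 0 \<and>
        (\<forall>a\<in>fr s \<inter> act s u. \<forall>b\<in>fr s \<inter> act s u. \<not> is_edge sg a b)"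
    using h[THEN conjunct2, THEN conjunct2, THEN conjunct1] by (rule bspec)
  show "arr s \<subseteq> V" using h by (rule conjunct1)
  show "fr s \<subseteq> arr s" using h[THEN conjunct2] by (rule conjunct1)
  show "\<And>S. y s S \<noteq> 0 \<Longrightarrow> S \<subseteq> arr s"
    using h[THEN conjunct2, THEN conjunct2, THEN conjunct2, THEN conjunct1] by blast
  show "wc atime s = (\<Sum>S\<in>Pow V. real (sur bip sg S) * y s S)"
    using h[THEN conjunct2, THEN conjunct2, THEN conjunct2, THEN conjunct2] .
  fix u assume u: "u \<in> arr s"
  note q = P3[OF u]
  show "u \<in> act s u" using q by (rule conjunct1)
  show "act s u \<subseteq> arr s" using q[THEN conjunct2] by (rule conjunct1)
  show "even (card (act s u - fr s))" using q[THEN conjunct2, THEN conjunct2, THEN conjunct2] by (rule conjunct1)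
  show "sum sg (act s u - fr s) = 0" using q[THEN conjunct2, THEN conjunct2, THEN conjunct2, THEN conjunct2] by (rule conjunct1)
  show "\<And>w. w \<in> act s u \<Longrightarrow> act s w = act s u" using q[THEN conjunct2, THEN conjunct2, THEN conjunct1] by (rule bspec)
  show "\<And>a b. a \<in> fr s \<inter> act s u \<Longrightarrow> b \<in> fr s \<inter> act s u \<Longrightarrow> \<not> is_edge sg a b"
    using q[THEN conjunct2, THEN conjunct2, THEN conjunct2, THEN conjunct2, THEN conjunct2] by blast
qed

lemma gd_invI:
  assumes "arr s \<subseteq> V" "fr s \<subseteq> arr s"
    "\<And>u. u \<in> arr s \<Longrightarrow> u \<in> act s u"
    "\<And>u. u \<in> arr s \<Longrightarrow> act s u \<subseteq> arr s"
    "\<And>u w. u \<in> arr s \<Longrightarrow> w \<in> act s u \<Longrightarrow> act s w = act s u"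
    "\<And>u. u \<in> arr s \<Longrightarrow> even (card (act s u - fr s))"
    "\<And>u. u \<in> arr s \<Longrightarrow> sum sg (act s u - fr s) = 0"
    "\<And>u a b. u \<in> arr s \<Longrightarrow> a \<in> fr s \<inter> act s u \<Longrightarrow> b \<in> fr s \<inter> act s u \<Longrightarrow> \<not> is_edge sg a b"
    "\<And>S. y s S \<noteq> 0 \<Longrightarrow> S \<subseteq> arr s"
    "wc atime s = (\<Sum>S\<in>Pow V. real (sur bip sg S) * y s S)"
  shows "gd_inv V atime bip sg s"
  unfolding gd_inv_def
  apply (intro conjI ballI allI impI)
  apply (rule assms(1))
  apply (rule assms(2))
  apply (rule assms(3); assumption)
  apply (rule assms(4); assumption)
  apply (rule assms(5); assumption)
  apply (rule assms(6); assumption)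
  apply (rule assms(7); assumption)
  apply (rule assms(8); assumption)
  apply (rule assms(9); assumption)
  apply (rule assms(10))
  done

lemma inv_init: "gd_inv V atime bip sg gd_init"
  by (simp add: gd_inv_def gd_init_def wc_def)

lemma inv_arrive:
  assumes I: "gd_inv V atime bip sg s" and u: "u \<in> V" "u \<notin> arr s" "atime u = tm s"
    and fV: "finite V"
    and F: "arr s' = insert u (arr s)" "fr s' = insert u (fr s)" "act s' = (act s)(u := {u})"
       "y s' = (\<lambda>S. if u \<in> S then 0 else y s S)" "tm s' = tm s" "mt s' = mt s"
  shows "gd_inv V atime bip sg s'"
proof -
  note D = gd_invD[OF I]
  have yeq: "y s' = y s"
  proof
    fix S show "y s' S = y s S" unfolding F(4) using D(9)[of S] u(2) by auto
  qed
  have notin: "\<And>w. w \<in> arr s \<Longrightarrow> u \<notin> act s w" using D(4) u(2) by blast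
  have fin: "finite (arr s)" using D(1) fV by (rule finite_subset)
  have "wc atime s' = wc atime s"
  proof -
    have "wc atime s' = (\<Sum>w\<in>insert u (arr s). (if w \<in> insert u (fr s) then tm s else mt s w) - atime w)"
      unfolding wc_def F(1,2,5,6) ..
    also have "\<dots> = (tm s - atime u) + (\<Sum>w\<in>arr s. (if w \<in> insert u (fr s) then tm s else mt s w) - atime w)"
      using fin u(2) by (simp add: sum.insert)
    also have "(\<Sum>w\<in>arr s. (if w \<in> insert u (fr s) then tm s else mt s w) - atime w) = wc atime s"
      unfolding wc_def using u(2) by (intro sum.cong) auto
    finally show ?thesis using u(3) by simp
  qed
  hence W: "wc atime s' = (\<Sum>S\<in>Pow V. real (sur bip sg S) * y s' S)" using D(10) yeq by simp
  have old: "act s' w = act s w" "act s' w - fr s' = act s w - fr s" "fr s' \<inter> act s' w = fr s \<inter> act s w"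
    if "w \<in> arr s" for w
  proof -
    have nu: "u \<notin> act s w" using notin that by blast
    have wu: "w \<noteq> u" using that u(2) by blast
    show aw: "act s' w = act s w" using F(3) wu by simp
    show "act s' w - fr s' = act s w - fr s" using nu aw F(2) by auto
    show "fr s' \<inter> act s' w = fr s \<inter> act s w" using nu aw F(2) by auto
  qed
  have new: "act s' u = {u}" using F(3) by simp
  have cases: "w = u \<or> w \<in> arr s" if "w \<in> arr s'" for w using that F(1) by simp
  show ?thesis
  proof (rule gd_invI)
    show "arr s' \<subseteq> V" using D(1) u(1) F(1) by simp
    show "fr s' \<subseteq> arr s'" using D(2) F(1,2) by auto
    show "\<And>S. y s' S \<noteq> 0 \<Longrightarrow> S \<subseteq> arr s'" using D(9) yeq F(1) by auto
    show "wc atime s' = (\<Sum>S\<in>Pow V. real (sur bip sg S) * y s' S)" by (rule W)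
    fix w assume w: "w \<in> arr s'"
    show "w \<in> act s' w"
      using cases[OF w]
    proof
      assume "w = u" thus ?thesis using new by simp
    next
      assume wa: "w \<in> arr s" thus ?thesis using old(1)[OF wa] D(3)[OF wa] by simp
    qed
    show "act s' w \<subseteq> arr s'"
      using cases[OF w]
    proof
      assume "w = u" thus ?thesis using new F(1) by simp
    next
      assume wa: "w \<in> arr s" thus ?thesis using old(1)[OF wa] D(4)[OF wa] F(1) by auto
    qed
    show "\<And>x. x \<in> act s' w \<Longrightarrow> act s' x = act s' w"
    proof -
      fix x assume x: "x \<in> act s' w"
      show "act s' x = act s' w"
      proof (cases "w = u")
        case True thus ?thesis using x new by simp
      next
        case False
        hence wa: "w \<in> arr s" using cases[OF w] by blast
        hence "x \<in> act s w" using x old(1) by simp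
        hence xa: "x \<in> arr s" using D(4)[OF wa] by blast
        have "act s x = act s w" by (rule D(5)[OF wa \<open>x \<in> act s w\<close>])
        thus ?thesis using old(1)[OF wa] old(1)[OF xa] by simp
      qed
    qed
    show "even (card (act s' w - fr s'))"
      using cases[OF w]
    proof
      assume "w = u" thus ?thesis using new F(2) by simp
    next
      assume wa: "w \<in> arr s" thus ?thesis using old(2)[OF wa] D(6)[OF wa] by simp
    qed
    show "sum sg (act s' w - fr s') = 0"
      using cases[OF w]
    proof
      assume "w = u" thus ?thesis using new F(2) by simp
    next
      assume wa: "w \<in> arr s" thus ?thesis using old(2)[OF wa] D(7)[OF wa] by simp
    qed
    show "\<And>a b. a \<in> fr s' \<inter> act s' w \<Longrightarrow> b \<in> fr s' \<inter> act s' w \<Longrightarrow> \<not> is_edge sg a b"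
    proof -
      fix a b assume a: "a \<in> fr s' \<inter> act s' w" and b: "b \<in> fr s' \<inter> act s' w"
      show "\<not> is_edge sg a b"
      proof (cases "w = u")
        case True thus ?thesis using a b new by (simp add: is_edge_def)
      next
        case False
        hence wa: "w \<in> arr s" using cases[OF w] by blast
        thus ?thesis using a b old(3)[OF wa] D(8)[OF wa] by simp
      qed
    qed
  qed
qed

lemma inv_tight:
  assumes I: "gd_inv V atime bip sg s" and fV: "finite V"
    and uv: "u \<in> arr s" "v \<in> arr s" "act s u \<noteq> act s v"
    and S: "S = act s u \<union> act s v"
    and gm: "greedy_match sg S (tm s) (fr s, mt s) (F', M')"
    and F: "arr s' = arr s" "fr s' = F'" "act s' = (\<lambda>w. if w \<in> S then S else act s w)"
       "y s' = y s" "tm s' = tm s" "mt s' = M'"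
  shows "gd_inv V atime bip sg s'"
proof -
  note D = gd_invD[OF I]
  have fin: "finite (arr s)" using D(1) fV by (rule finite_subset)
  have finF: "finite (fr s)" using D(2) fin by (rule finite_subset)
  have G: "F' \<subseteq> fr s \<and> fr s - F' \<subseteq> S \<and> even (card (fr s - F')) \<and>
         sum sg (fr s - F') = 0 \<and>
         (\<forall>w. M' w = (if w \<in> fr s - F' then tm s else mt s w)) \<and>
         \<not> (\<exists>a\<in>F' \<inter> S. \<exists>b\<in>F' \<inter> S. is_edge sg a b)"
    using gm_props[OF gm] finF by simp
  have G1: "F' \<subseteq> fr s" and G2: "fr s - F' \<subseteq> S" and G3: "even (card (fr s - F'))"
    and G4: "sum sg (fr s - F') = 0" and G5: "\<And>w. M' w = (if w \<in> fr s - F' then tm s else mt s w)"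
    and G6: "\<And>a b. a \<in> F' \<inter> S \<Longrightarrow> b \<in> F' \<inter> S \<Longrightarrow> \<not> is_edge sg a b"
    using G by blast+
  have disj: "act s u \<inter> act s v = {}"
  proof (rule ccontr)
    assume "act s u \<inter> act s v \<noteq> {}"
    then obtain x where x: "x \<in> act s u" "x \<in> act s v" by blast
    have "act s x = act s u" by (rule D(5)[OF uv(1) x(1)])
    moreover have "act s x = act s v" by (rule D(5)[OF uv(2) x(2)])
    ultimately show False using uv(3) by simp
  qed
  have Ssub: "S \<subseteq> arr s" using D(4)[OF uv(1)] D(4)[OF uv(2)] S by blast
  have outside: "act s w \<inter> S = {}" if w: "w \<in> arr s" "w \<notin> S" for w
  proof (rule ccontr)
    assume "act s w \<inter> S \<noteq> {}"
    then obtain x where x: "x \<in> act s w" "x \<in> S" by blast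
    have e1: "act s x = act s w" by (rule D(5)[OF w(1) x(1)])
    have "act s x = act s u \<or> act s x = act s v"
      using x(2) S D(5)[OF uv(1)] D(5)[OF uv(2)] by blast
    hence "act s w \<subseteq> S" using e1 S by auto
    thus False using D(3)[OF w(1)] w(2) by blast
  qed
  have SF: "S - F' = (act s u - fr s) \<union> ((act s v - fr s) \<union> (fr s - F'))"
    using G1 G2 S by blast
  have finS: "finite S" using Ssub fin by (rule finite_subset)
  have fu: "finite (act s u - fr s)" using finS S by (auto intro: finite_subset)
  have fv: "finite (act s v - fr s)" using finS S by (auto intro: finite_subset)
  have ff: "finite (fr s - F')" using finF by simp
  have d1: "(act s u - fr s) \<inter> ((act s v - fr s) \<union> (fr s - F')) = {}" using disj by blast
  have d2: "(act s v - fr s) \<inter> (fr s - F') = {}" by blast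
  have cardS: "card (S - F') = card (act s u - fr s) + (card (act s v - fr s) + card (fr s - F'))"
    unfolding SF using card_Un_disjoint[OF fu finite_UnI[OF fv ff] d1]
      card_Un_disjoint[OF fv ff d2] by simp
  have sumS: "sum sg (S - F') = sum sg (act s u - fr s) + (sum sg (act s v - fr s) + sum sg (fr s - F'))"
    unfolding SF using sum.union_disjoint[OF fu finite_UnI[OF fv ff] d1, of sg]
      sum.union_disjoint[OF fv ff d2, of sg] by simp
  have W: "wc atime s' = wc atime s"
    unfolding wc_def F(1,2,5,6)
  proof (rule sum.cong)
    fix w assume "w \<in> arr s"
    show "(if w \<in> F' then tm s else M' w) - atime w = (if w \<in> fr s then tm s else mt s w) - atime w"
      using G1 G5[of w] by auto
  qed simp
  show ?thesis
  proof (rule gd_invI)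
    show "arr s' \<subseteq> V" using D(1) F(1) by simp
    show "fr s' \<subseteq> arr s'" using D(2) G1 F(1,2) by auto
    show "\<And>X. y s' X \<noteq> 0 \<Longrightarrow> X \<subseteq> arr s'" using D(9) F(1,4) by simp
    show "wc atime s' = (\<Sum>S\<in>Pow V. real (sur bip sg S) * y s' S)" using W D(10) F(4) by simp
    fix w assume w: "w \<in> arr s'"
    hence wa: "w \<in> arr s" using F(1) by simp
    show "w \<in> act s' w"
    proof (cases "w \<in> S")
      case True thus ?thesis using F(3) by simp
    next
      case False thus ?thesis using F(3) D(3)[OF wa] by simp
    qed
    show "act s' w \<subseteq> arr s'"
    proof (cases "w \<in> S")
      case True thus ?thesis using F(1,3) Ssub by simp
    next
      case False thus ?thesis using F(1,3) D(4)[OF wa] by simp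
    qed
    show "\<And>x. x \<in> act s' w \<Longrightarrow> act s' x = act s' w"
    proof -
      fix x assume x: "x \<in> act s' w"
      show "act s' x = act s' w"
      proof (cases "w \<in> S")
        case True thus ?thesis using x F(3) by simp
      next
        case False
        hence xw: "x \<in> act s w" using x F(3) by simp
        hence "x \<notin> S" using outside[OF wa False] by blast
        thus ?thesis using False F(3) D(5)[OF wa xw] by simp
      qed
    qed
    show "even (card (act s' w - fr s'))"
    proof (cases "w \<in> S")
      case True thus ?thesis using F(2,3) cardS D(6)[OF uv(1)] D(6)[OF uv(2)] G3 by simp
    next
      case False
      have "act s w - F' = act s w - fr s" using outside[OF wa False] G1 G2 by blast
      thus ?thesis using False F(2,3) D(6)[OF wa] by simp
    qed
    show "sum sg (act s' w - fr s') = 0"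
    proof (cases "w \<in> S")
      case True thus ?thesis using F(2,3) sumS D(7)[OF uv(1)] D(7)[OF uv(2)] G4 by simp
    next
      case False
      have "act s w - F' = act s w - fr s" using outside[OF wa False] G1 G2 by blast
      thus ?thesis using False F(2,3) D(7)[OF wa] by simp
    qed
    show "\<And>a b. a \<in> fr s' \<inter> act s' w \<Longrightarrow> b \<in> fr s' \<inter> act s' w \<Longrightarrow> \<not> is_edge sg a b"
    proof -
      fix a b assume a: "a \<in> fr s' \<inter> act s' w" and b: "b \<in> fr s' \<inter> act s' w"
      show "\<not> is_edge sg a b"
      proof (cases "w \<in> S")
        case True thus ?thesis using a b F(2,3) G6 by simp
      next
        case False
        have "a \<in> fr s \<inter> act s w" "b \<in> fr s \<inter> act s w" using a b F(2,3) False G1 by auto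
        thus ?thesis using D(8)[OF wa] by blast
      qed
    qed
  qed
qed

lemma inv_advance:
  assumes I: "gd_inv V atime bip sg s" and fV: "finite V" and m: "modeok bip sg V"
    and yd: "y' = (\<lambda>S. if S \<in> act s ` arr s \<and> S \<inter> fr s \<noteq> {} then y s S + (\<tau>' - tm s) else y s S)"
    and F: "arr s' = arr s" "fr s' = fr s" "act s' = act s" "y s' = y'" "tm s' = \<tau>'" "mt s' = mt s"
  shows "gd_inv V atime bip sg s'"
proof -
  note D = gd_invD[OF I]
  define d where "d = \<tau>' - tm s"
  define A where "A = act s ` arr s"
  define G where "G = {X \<in> A. X \<inter> fr s \<noteq> {}}"
  have fin: "finite (arr s)" using D(1) fV by (rule finite_subset)
  have finF: "finite (fr s)" using D(2) fin by (rule finite_subset)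
  have finA: "finite A" unfolding A_def using fin by simp
  have GA: "G \<subseteq> A" unfolding G_def by blast
  have AP: "A \<subseteq> Pow V" unfolding A_def using D(4) D(1) by blast
  have part: "card (fr s) = (\<Sum>X\<in>A. card (fr s \<inter> X))"
  proof -
    have U: "(\<Union>X\<in>A. fr s \<inter> X) = fr s"
    proof
      show "(\<Union>X\<in>A. fr s \<inter> X) \<subseteq> fr s" by blast
      show "fr s \<subseteq> (\<Union>X\<in>A. fr s \<inter> X)"
      proof
        fix w assume w: "w \<in> fr s"
        hence wa: "w \<in> arr s" using D(2) by blast
        hence "act s w \<in> A" unfolding A_def by blast
        thus "w \<in> (\<Union>X\<in>A. fr s \<inter> X)" using w D(3)[OF wa] by blast
      qed
    qed
    have dj: "\<forall>X\<in>A. \<forall>Z\<in>A. X \<noteq> Z \<longrightarrow> (fr s \<inter> X) \<inter> (fr s \<inter> Z) = {}"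
    proof (intro ballI impI)
      fix X Z assume X: "X \<in> A" and Z: "Z \<in> A" and ne: "X \<noteq> Z"
      obtain a where a: "a \<in> arr s" "X = act s a" using X unfolding A_def by blast
      obtain b where b: "b \<in> arr s" "Z = act s b" using Z unfolding A_def by blast
      show "(fr s \<inter> X) \<inter> (fr s \<inter> Z) = {}"
      proof (rule ccontr)
        assume "(fr s \<inter> X) \<inter> (fr s \<inter> Z) \<noteq> {}"
        then obtain x where x: "x \<in> act s a" "x \<in> act s b" using a b by blast
        have "act s x = act s a" by (rule D(5)[OF a(1) x(1)])
        moreover have "act s x = act s b" by (rule D(5)[OF b(1) x(2)])
        ultimately show False using ne a b by simp
      qed
    qed
    have "card (\<Union>X\<in>A. fr s \<inter> X) = (\<Sum>X\<in>A. card (fr s \<inter> X))"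
      by (rule card_UN_disjoint[OF finA _ dj]) (use finF in auto)
    thus ?thesis using U by simp
  qed
  have p2: "(\<Sum>X\<in>A. card (fr s \<inter> X)) = (\<Sum>X\<in>G. card (fr s \<inter> X))"
    by (rule sum.mono_neutral_right[OF finA GA]) (auto simp: G_def Int_commute)
  have p3: "(\<Sum>X\<in>G. real (sur bip sg X)) = (\<Sum>X\<in>G. real (card (fr s \<inter> X)))"
  proof (rule sum.cong)
    fix X assume X: "X \<in> G"
    then obtain a where a: "a \<in> arr s" "X = act s a" unfolding G_def A_def by blast
    have "card (fr s \<inter> X) = sur bip sg X"
      unfolding a(2)
    proof (rule sur_eq[OF m])
      show "act s a \<subseteq> V" using D(4)[OF a(1)] D(1) by blast
      show "finite (act s a)" using D(4)[OF a(1)] fin by (rule finite_subset)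
      show "even (card (act s a - fr s))" by (rule D(6)[OF a(1)])
      show "sum sg (act s a - fr s) = 0" by (rule D(7)[OF a(1)])
      show "\<not> (\<exists>x\<in>fr s \<inter> act s a. \<exists>z\<in>fr s \<inter> act s a. is_edge sg x z)"
        using D(8)[OF a(1)] by blast
    qed
    thus "real (sur bip sg X) = real (card (fr s \<inter> X))" by simp
  qed simp
  have cardG: "real (card (fr s)) = (\<Sum>X\<in>G. real (sur bip sg X))"
    using part p2 p3 by simp
  have finP: "finite (Pow V)" using fV by simp
  have R: "(\<Sum>X\<in>Pow V. real (sur bip sg X) * y' X)
      = (\<Sum>X\<in>Pow V. real (sur bip sg X) * y s X) + (\<Sum>X\<in>Pow V. if X \<in> G then real (sur bip sg X) * d else 0)"
    unfolding sum.distrib[symmetric]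
    by (rule sum.cong) (auto simp: yd G_def A_def d_def algebra_simps)
  have R2: "(\<Sum>X\<in>Pow V. if X \<in> G then real (sur bip sg X) * d else 0) = (\<Sum>X\<in>G. real (sur bip sg X) * d)"
    using sum.inter_restrict[OF finP, of "\<lambda>X. real (sur bip sg X) * d" G] GA AP
    by (simp add: Int_absorb1)
  have Wc: "wc atime s' = wc atime s + (\<Sum>w\<in>arr s. if w \<in> fr s then d else 0)"
    unfolding wc_def F(1,2,5,6) sum.distrib[symmetric]
    by (rule sum.cong) (auto simp: d_def)
  have Wc2: "(\<Sum>w\<in>arr s. if w \<in> fr s then d else 0) = real (card (fr s)) * d"
    using sum.inter_restrict[OF fin, of "\<lambda>w. d" "fr s"] D(2)
    by (simp add: Int_absorb1)
  have W: "wc atime s' = (\<Sum>X\<in>Pow V. real (sur bip sg X) * y s' X)"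
    unfolding F(4) R R2 Wc Wc2 D(10) cardG sum_distrib_right ..
  show ?thesis
  proof (rule gd_invI)
    show "arr s' \<subseteq> V" using D(1) F(1) by simp
    show "fr s' \<subseteq> arr s'" using D(2) F(1,2) by simp
    show "\<And>X. y s' X \<noteq> 0 \<Longrightarrow> X \<subseteq> arr s'"
    proof -
      fix X assume X: "y s' X \<noteq> 0"
      show "X \<subseteq> arr s'"
      proof (cases "X \<in> A")
        case True
        then obtain a where "a \<in> arr s" "X = act s a" unfolding A_def by blast
        thus ?thesis using D(4) F(1) by simp
      next
        case False
        hence "y s X \<noteq> 0" using X F(4) yd A_def by simp
        thus ?thesis using D(9) F(1) by simp
      qed
    qed
    show "wc atime s' = (\<Sum>S\<in>Pow V. real (sur bip sg S) * y s' S)" by (rule W)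
    fix w assume w: "w \<in> arr s'"
    hence wa: "w \<in> arr s" using F(1) by simp
    show "w \<in> act s' w" using D(3)[OF wa] F(3) by simp
    show "act s' w \<subseteq> arr s'" using D(4)[OF wa] F(1,3) by simp
    show "\<And>x. x \<in> act s' w \<Longrightarrow> act s' x = act s' w" using D(5)[OF wa] F(3) by simp
    show "even (card (act s' w - fr s'))" using D(6)[OF wa] F(2,3) by simp
    show "sum sg (act s' w - fr s') = 0" using D(7)[OF wa] F(2,3) by simp
    show "\<And>a b. a \<in> fr s' \<inter> act s' w \<Longrightarrow> b \<in> fr s' \<inter> act s' w \<Longrightarrow> \<not> is_edge sg a b"
      using D(8)[OF wa] F(2,3) by simp
  qed
qed

lemma inv_step:
  assumes st: "gd_step V pos atime sg s s'" and I: "gd_inv V atime bip sg s"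
    and fV: "finite V" and m: "modeok bip sg V"
  shows "gd_inv V atime bip sg s'"
  using st
proof (cases rule: gd_step.cases)
  case (arrive u)
  show ?thesis
    by (rule inv_arrive[OF I arrive(2,3,4) fV]) (simp_all add: arrive(1))
next
  case (tight u v S F' M')
  show ?thesis
    by (rule inv_tight[OF I fV tight(2,3,5,7,8)]) (simp_all add: tight(1))
next
  case (advance \<tau>' y')
  show ?thesis
    by (rule inv_advance[OF I fV m advance(5)]) (simp_all add: advance(1))
qed

lemma inv_run:
  assumes "(gd_step V pos atime sg)\<^sup>*\<^sup>* gd_init s" "finite V" "modeok bip sg V"
  shows "gd_inv V atime bip sg s"
  using assms(1)
proof (induction rule: rtranclp_induct)
  case base
  show ?case by (rule inv_init)
next
  case (step b c)
  show ?case by (rule inv_step[OF step(2) step(3) assms(2,3)])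
qed

theorem lemma5:
  fixes V :: "'r set" and pos :: "'r \<Rightarrow> 'p::metric_space"
    and atime :: "'r \<Rightarrow> real" and sg :: "'r \<Rightarrow> int" and bip :: bool
    and s :: "'r gd_state"
  assumes inst: "if bip then mbpmd_instance V atime sg else mpmd_instance V atime sg"
    and run: "(gd_step V pos atime sg)\<^sup>*\<^sup>* gd_init s"
    and finished: "arr s = V" "fr s = {}"
  shows "(\<Sum>u\<in>V. mt s u - atime u) = (\<Sum>S\<in>Pow V. real (sur bip sg S) * y s S)"
proof -
  have fV: "finite V" using inst by (cases bip) (auto simp: mbpmd_instance_def mpmd_instance_def)
  have m: "modeok bip sg V" using inst by (cases bip) (auto simp: mbpmd_instance_def mpmd_instance_def modeok_def)
  have I: "gd_inv V atime bip sg s" by (rule inv_run[OF run fV m])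
  have "wc atime s = (\<Sum>u\<in>V. mt s u - atime u)" unfolding wc_def finished by simp
  thus ?thesis using gd_invD(10)[OF I] by simp
qed

end
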